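(* Let $n \ge 2$, $k \ge 1$ and $n_i, m_i \in \mathbb{Z}\setminus\{0\}$ for $1 \le i \le k$. Put $n_{k+1} = 1 - \sum_{i=1}^k n_i$ and $m_{k+1} = 1 - \sum_{i=1}^k m_i$. (I) If $n_i' \equiv n_i \pmod n$ and $m_i' \equiv m_i \pmod n$ for all $1\le i\le k$, then $\mathcal{P}_n(n_1,\dots,n_k;m_1,\dots,m_k) \simeq_Q \mathcal{P}_n(n_1',\dots,n_k';m_1',\dots,m_k')$. (II) $\mathcal{P}_n(n_1,\dots,n_k;m_1,\dots,m_k) \simeq_Q \mathcal{P}_n(n_2,\dots,n_{k+1};m_2,\dots,m_{k+1})$. (III) $\mathcal{P}_n(n_1,\dots,n_k;m_1,\dots,m_k) \simeq_Q \mathcal{P}_n(m_1,\dots,m_k;n_2,\dots,n_{k+1})$.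
   Context: For integers $n\ge 2$, $k\ge 0$, $n_1,\dots,n_k,m_1,\dots,m_k$, with $n_{k+1} = 1 - \sum_{i=1}^k n_i$, $m_{k+1} = 1 - \sum_{i=1}^k m_i$, $\mathcal{P}_n(n_1,\dots,n_k;m_1,\dots,m_k) = \langle x, y \mid x^n y^{-2},\ x^{n_1} y x^{m_1} y^{-1} \cdots x^{n_{k+1}} y x^{m_{k+1}} y^{-1} \rangle$. Two finite presentations on the same generators are $Q$-equivalent ($\simeq_Q$) if related by a finite sequence of the moves: replace a relator $r_i$ by $r_ir_j$ ($j\neq i$); replace $r_i$ by $r_i^{-1}$; replace $r_i$ by $wr_iw^{-1}$ for some $w$ in the free group on the generators. *)

theory Defs
  imports "HOL-Number_Theory.Cong"
begin

datatype gen = GX | GY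

(* a letter is a generator together with a flag: True = inverse letter *)
type_synonym letter = "gen \<times> bool"
type_synonym word = "letter list"

definition inv_letter :: "letter \<Rightarrow> letter" where
  "inv_letter a = (fst a, \<not> snd a)"

definition inv_word :: "word \<Rightarrow> word" where
  "inv_word w = rev (map inv_letter w)"

inductive cancel_step :: "word \<Rightarrow> word \<Rightarrow> bool" where
  "cancel_step (u @ [a, inv_letter a] @ v) (u @ v)"

definition free_eq :: "word \<Rightarrow> word \<Rightarrow> bool" where
  "free_eq = (sup cancel_step cancel_step\<inverse>\<inverse>)\<^sup>*\<^sup>*"

definition gpow :: "gen \<Rightarrow> int \<Rightarrow> word" where
  "gpow g e = (if e \<ge> 0 then replicate (nat e) (g, False) else replicate (nat (- e)) (g, True))"

type_synonym presentation = "word list"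

(* elementary Q-moves; relators are elements of the free group, so replacing a
   relator by a freely equal word is also allowed *)
inductive Q_move :: "presentation \<Rightarrow> presentation \<Rightarrow> bool" where
  mult: "i < length rs \<Longrightarrow> j < length rs \<Longrightarrow> j \<noteq> i \<Longrightarrow> Q_move rs (rs[i := rs!i @ rs!j])"
| inv: "i < length rs \<Longrightarrow> Q_move rs (rs[i := inv_word (rs!i)])"
| conj: "i < length rs \<Longrightarrow> Q_move rs (rs[i := w @ rs!i @ inv_word w])"
| free: "i < length rs \<Longrightarrow> free_eq (rs!i) r \<Longrightarrow> Q_move rs (rs[i := r])"

definition Q_equiv :: "presentation \<Rightarrow> presentation \<Rightarrow> bool" (infix "\<simeq>\<^sub>Q" 50) where
  "Q_equiv = (sup Q_move Q_move\<inverse>\<inverse>)\<^sup>*\<^sup>*"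

definition ext :: "int list \<Rightarrow> int list" where
  "ext ns = ns @ [1 - sum_list ns]"

(* P_n(n_1..n_k; m_1..m_k) = < x, y | x^n y^-2, prod_{i=1}^{k+1} x^{n_i} y x^{m_i} y^-1 > *)
definition Pres :: "int \<Rightarrow> int list \<Rightarrow> int list \<Rightarrow> presentation" where
  "Pres n ns ms =
     [gpow GX n @ gpow GY (-2),
      concat (map (\<lambda>(a, b). gpow GX a @ [(GY, False)] @ gpow GX b @ [(GY, True)])
                  (zip (ext ns) (ext ms)))]"

end

theory Submission
  imports Defs
begin

lemma rt_sym: "(sup R R\<inverse>\<inverse>)\<^sup>*\<^sup>* a b \<Longrightarrow> (sup R R\<inverse>\<inverse>)\<^sup>*\<^sup>* b a"
  by (metis rtranclp_symclp_sym symclp_pointfree)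

lemma inv_letter_inv[simp]: "inv_letter (inv_letter a) = a"
  by (simp add: inv_letter_def)
lemma inv_word_inv[simp]: "inv_word (inv_word w) = w"
  by (simp add: inv_word_def rev_map comp_def)
lemma inv_word_simps[simp]: "inv_word [] = []" "inv_word (a # w) = inv_word w @ [inv_letter a]"
  "inv_word (u @ v) = inv_word v @ inv_word u"
  by (simp_all add: inv_word_def)

lemma free_refl[simp]: "free_eq a a" by (simp add: free_eq_def)
lemma free_sym: "free_eq a b \<Longrightarrow> free_eq b a" unfolding free_eq_def by (rule rt_sym)
lemma free_trans: "free_eq a b \<Longrightarrow> free_eq b c \<Longrightarrow> free_eq a c"
  unfolding free_eq_def by (rule rtranclp_trans)
lemma free_cancel: "free_eq (u @ [a, inv_letter a] @ v) (u @ v)"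
  unfolding free_eq_def
  by (rule r_into_rtranclp) (metis cancel_step.intros sup2I1)

lemma cancel_step_ctx: "cancel_step a b \<Longrightarrow> cancel_step (u @ a @ v) (u @ b @ v)"
proof (induction rule: cancel_step.induct)
  case (1 p c q)
  have "cancel_step ((u @ p) @ [c, inv_letter c] @ (q @ v)) ((u @ p) @ (q @ v))"
    by (rule cancel_step.intros)
  then show ?case by simp
qed

lemma free_ctx: "free_eq a b \<Longrightarrow> free_eq (u @ a @ v) (u @ b @ v)"
  unfolding free_eq_def
proof (induction rule: rtranclp_induct)
  case base then show ?case by simp
next
  case (step y z)
  then have "(sup cancel_step cancel_step\<inverse>\<inverse>) (u @ y @ v) (u @ z @ v)"
    by (auto intro: cancel_step_ctx)
  then show ?case using step(3) by (rule rtranclp.rtrancl_into_rtrancl[rotated])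
qed

lemma free_cancel_word: "free_eq (u @ w @ inv_word w @ v) (u @ v)"
proof (induction w arbitrary: u v)
  case Nil then show ?case by simp
next
  case (Cons c w)
  have "free_eq ((u @ [c]) @ w @ inv_word w @ ([inv_letter c] @ v)) ((u @ [c]) @ ([inv_letter c] @ v))"
    by (rule Cons)
  then have "free_eq (u @ (c # w) @ inv_word (c # w) @ v) (u @ [c, inv_letter c] @ v)" by simp
  then show ?case using free_cancel free_trans by blast
qed

lemma free_cancel_word': "free_eq (u @ inv_word w @ w @ v) (u @ v)"
  using free_cancel_word[of u "inv_word w" v] by simp

lemma rep_cancel: "free_eq (replicate p c @ replicate q (inv_letter c))
   (replicate (p - q) c @ replicate (q - p) (inv_letter c))"
proof (induction p arbitrary: q)
  case 0 then show ?case by simp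
next
  case (Suc p)
  show ?case
  proof (cases q)
    case 0 then show ?thesis by simp
  next
    case (Suc q')
    have "replicate (Suc p) c @ replicate q (inv_letter c) =
       replicate p c @ [c, inv_letter c] @ replicate q' (inv_letter c)"
      using Suc by (simp add: replicate_append_same[symmetric])
    then have "free_eq (replicate (Suc p) c @ replicate q (inv_letter c))
          (replicate p c @ replicate q' (inv_letter c))" using free_cancel by simp
    moreover note Suc.IH[of q']
    ultimately show ?thesis using Suc by (auto intro: free_trans)
  qed
qed

lemma gpow_add: "free_eq (gpow g a @ gpow g b) (gpow g (a + b))"
proof -
  have il: "inv_letter (g, False) = (g, True)" "inv_letter (g, True) = (g, False)"
    by (simp_all add: inv_letter_def)
  consider "a \<ge> 0" "b \<ge> 0" | "a < 0" "b < 0" | "a \<ge> 0" "b < 0" | "a < 0" "b \<ge> 0" by linarith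
  then show ?thesis
  proof cases
    case 1 then show ?thesis
      by (simp add: gpow_def replicate_add[symmetric] nat_add_distrib)
  next
    case 2 then show ?thesis
      by (simp add: gpow_def replicate_add[symmetric] nat_add_distrib[symmetric])
  next
    case 3
    have "free_eq (gpow g a @ gpow g b) (replicate (nat a - nat (-b)) (g, False) @ replicate (nat (-b) - nat a) (g, True))"
      using 3 rep_cancel[of "nat a" "(g,False)" "nat (-b)"] by (simp add: gpow_def il)
    moreover have "replicate (nat a - nat (-b)) (g, False) @ replicate (nat (-b) - nat a) (g, True) = gpow g (a+b)"
      using 3 by (auto simp: gpow_def nat_diff_distrib)
    ultimately show ?thesis by simp
  next
    case 4
    have "free_eq (gpow g a @ gpow g b) (replicate (nat (-a) - nat b) (g, True) @ replicate (nat b - nat (-a)) (g, False))"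
      using 4 rep_cancel[of "nat (-a)" "(g,True)" "nat b"] by (simp add: gpow_def il)
    moreover have "replicate (nat (-a) - nat b) (g, True) @ replicate (nat b - nat (-a)) (g, False) = gpow g (a+b)"
      using 4 by (auto simp: gpow_def nat_diff_distrib)
    ultimately show ?thesis by simp
  qed
qed

lemma Qe_refl: "Q_equiv a a" by (simp add: Q_equiv_def)
lemma Qe_sym: "Q_equiv a b \<Longrightarrow> Q_equiv b a" unfolding Q_equiv_def by (rule rt_sym)
lemma Qe_trans: "Q_equiv a b \<Longrightarrow> Q_equiv b c \<Longrightarrow> Q_equiv a c"
  unfolding Q_equiv_def by (rule rtranclp_trans)
lemma Qe_move: "Q_move a b \<Longrightarrow> Q_equiv a b"
  unfolding Q_equiv_def by (rule r_into_rtranclp) simp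

definition R1 :: "int \<Rightarrow> word" where "R1 n = gpow GX n @ gpow GY (-2)"
definition SQ :: "int \<Rightarrow> word \<Rightarrow> word \<Rightarrow> bool" where
  "SQ n r r' = Q_equiv [R1 n, r] [R1 n, r']"

lemma SQ_refl[simp]: "SQ n r r" by (simp add: SQ_def Qe_refl)
lemma SQ_sym: "SQ n a b \<Longrightarrow> SQ n b a" by (simp add: SQ_def Qe_sym)
lemma SQ_trans: "SQ n a b \<Longrightarrow> SQ n b c \<Longrightarrow> SQ n a c" unfolding SQ_def by (rule Qe_trans)

lemma SQ_free: "free_eq r r' \<Longrightarrow> SQ n r r'"
  unfolding SQ_def using Q_move.free[of 1 "[R1 n, r]" r'] by (simp add: Qe_move)
lemma SQ_conj: "SQ n r (w @ r @ inv_word w)"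
  unfolding SQ_def using Q_move.conj[of 1 "[R1 n, r]" w] by (simp add: Qe_move)
lemma SQ_mult: "SQ n r (r @ R1 n)"
  unfolding SQ_def using Q_move.mult[of 1 "[R1 n, r]" 0] by (simp add: Qe_move)

lemma SQ_free_ctx: "free_eq a b \<Longrightarrow> SQ n (u @ a @ v) (u @ b @ v)"
  by (rule SQ_free, rule free_ctx)

lemma SQ_rot: "SQ n (u @ v) (v @ u)"
proof -
  have "SQ n (u @ v) (v @ (u @ v) @ inv_word v)" by (rule SQ_conj)
  moreover have "free_eq ((v @ u) @ v @ inv_word v @ []) ((v @ u) @ [])" by (rule free_cancel_word)
  ultimately show ?thesis by (auto intro: SQ_trans SQ_free)
qed

lemma SQ_ins: "SQ n (u @ v) (u @ R1 n @ v)"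
proof -
  have "SQ n (u @ v) (v @ u)" by (rule SQ_rot)
  moreover have "SQ n (v @ u) (v @ u @ R1 n)" using SQ_mult[of n "v @ u"] by simp
  moreover have "SQ n (v @ u @ R1 n) ((u @ R1 n) @ v)" using SQ_rot[of n v "u @ R1 n"] by simp
  ultimately show ?thesis by (auto intro: SQ_trans)
qed

abbreviation "yy \<equiv> (GY, False)"
abbreviation "yi \<equiv> (GY, True)"
abbreviation "XX n \<equiv> gpow GX n"

lemma inv_y[simp]: "inv_letter yy = yi" "inv_letter yi = yy" by (simp_all add: inv_letter_def)
lemma R1_eq: "R1 n = XX n @ [yi, yi]"
  by (simp add: R1_def gpow_def numeral_2_eq_2)

lemma SQ_A: "SQ n (u @ [yy, yy] @ v) (u @ XX n @ v)"
proof -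
  have "SQ n (u @ [yy, yy] @ v) (u @ R1 n @ [yy, yy] @ v)" by (rule SQ_ins)
  moreover have "free_eq ((u @ XX n) @ [yi, yi] @ inv_word [yi,yi] @ v) ((u @ XX n) @ v)"
    by (rule free_cancel_word)
  ultimately show ?thesis by (auto simp: R1_eq intro: SQ_trans SQ_free)
qed

lemma SQ_A': "SQ n (u @ [yi, yi] @ v) (u @ inv_word (XX n) @ v)"
proof -
  have "free_eq (u @ inv_word (XX n) @ XX n @ ([yi,yi] @ v)) (u @ ([yi,yi] @ v))"
    by (rule free_cancel_word')
  then have 1: "SQ n (u @ [yi, yi] @ v) ((u @ inv_word (XX n)) @ XX n @ ([yi,yi] @ v))"
    by (auto intro: SQ_free free_sym)
  have 2: "SQ n ((u @ inv_word (XX n)) @ XX n @ ([yi,yi] @ v)) ((u @ inv_word (XX n)) @ [yy,yy] @ ([yi,yi] @ v))"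
    by (rule SQ_sym, rule SQ_A)
  have "free_eq ((u @ inv_word (XX n)) @ [yy,yy] @ inv_word [yy,yy] @ v) ((u @ inv_word (XX n)) @ v)"
    by (rule free_cancel_word)
  then have 3: "SQ n ((u @ inv_word (XX n)) @ [yy,yy] @ ([yi,yi] @ v)) (u @ inv_word (XX n) @ v)"
    by (auto intro: SQ_free)
  show ?thesis using 1 2 3 by (blast intro: SQ_trans)
qed

lemma gpow_comm: "free_eq (gpow g a @ gpow g b) (gpow g b @ gpow g a)"
  by (metis add.commute free_sym free_trans gpow_add)

lemma SQ_M1: "SQ n (u @ XX n @ [c] @ v) (u @ [c] @ XX n @ v)"
proof -
  obtain g b where c: "c = (g, b)" by (cases c)
  show ?thesis
  proof (cases g)
    case GX
    have "[c] = gpow GX (if b then -1 else 1)" using c GX by (simp add: gpow_def)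
    moreover have "SQ n (u @ XX n @ gpow GX e @ v) (u @ gpow GX e @ XX n @ v)" for e
      using SQ_free_ctx[OF gpow_comm[of GX n e], of n u v] by simp
    ultimately show ?thesis by metis
  next
    case GY
    show ?thesis
    proof (cases b)
      case False
      then have cy: "c = yy" using c GY by simp
      have 1: "SQ n (u @ XX n @ [c] @ v) (u @ [yy,yy] @ ([yy] @ v))"
        using SQ_A[of n u "[yy] @ v"] cy by (auto intro: SQ_sym)
      have 2: "SQ n ((u @ [yy]) @ [yy,yy] @ v) ((u @ [yy]) @ XX n @ v)" by (rule SQ_A)
      show ?thesis using 1 2 cy by (auto intro: SQ_trans)
    next
      case True
      then have cy: "c = yi" using c GY by simp
      have 1: "SQ n (u @ XX n @ [c] @ v) (u @ [yy,yy] @ ([yi] @ v))"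
        using SQ_A[of n u "[yi] @ v"] cy by (auto intro: SQ_sym)
      have 2: "free_eq ((u @ [yy]) @ [yy, inv_letter yy] @ v) ((u @ [yy]) @ v)" by (rule free_cancel)
      have 3: "free_eq (u @ [yi, inv_letter yi] @ ([yy] @ v)) (u @ ([yy] @ v))" by (rule free_cancel)
      have 4: "SQ n ((u @ [yi]) @ [yy,yy] @ v) ((u @ [yi]) @ XX n @ v)" by (rule SQ_A)
      have "SQ n (u @ [yy,yy] @ ([yi] @ v)) (u @ [yi] @ [yy,yy] @ v)"
        using 2 3 by (auto intro!: SQ_free elim: free_trans dest: free_sym)
      then show ?thesis using 1 4 cy by (auto intro: SQ_trans)
    qed
  qed
qed

lemma SQ_M2: "SQ n (u @ XX n @ w @ v) (u @ w @ XX n @ v)"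
proof (induction w arbitrary: u)
  case Nil then show ?case by simp
next
  case (Cons c w)
  have "SQ n (u @ XX n @ [c] @ (w @ v)) (u @ [c] @ XX n @ (w @ v))" by (rule SQ_M1)
  moreover have "SQ n ((u @ [c]) @ XX n @ w @ v) ((u @ [c]) @ w @ XX n @ v)" by (rule Cons)
  ultimately show ?case by (auto intro: SQ_trans)
qed

lemma SQ_Mi: "SQ n (u @ inv_word (XX n) @ w @ v) (u @ w @ inv_word (XX n) @ v)"
proof -
  let ?I = "inv_word (XX n)"
  have "free_eq ((u @ ?I @ w) @ XX n @ inv_word (XX n) @ v) ((u @ ?I @ w) @ v)"
    by (rule free_cancel_word)
  then have 1: "SQ n (u @ ?I @ w @ v) ((u @ ?I) @ w @ XX n @ (?I @ v))"
    by (auto intro: SQ_free free_sym)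
  have 2: "SQ n ((u @ ?I) @ w @ XX n @ (?I @ v)) ((u @ ?I) @ XX n @ w @ (?I @ v))"
    by (rule SQ_sym, rule SQ_M2)
  have "free_eq (u @ ?I @ XX n @ (w @ ?I @ v)) (u @ (w @ ?I @ v))"
    by (rule free_cancel_word')
  then have 3: "SQ n ((u @ ?I) @ XX n @ w @ (?I @ v)) (u @ w @ ?I @ v)"
    by (auto intro: SQ_free)
  show ?thesis using 1 2 3 by (blast intro: SQ_trans)
qed

definition W :: "(int \<times> int) list \<Rightarrow> word" where
  "W ps = concat (map (\<lambda>(a, b). gpow GX a @ [(GY, False)] @ gpow GX b @ [(GY, True)]) ps)"

lemma W_simps[simp]: "W [] = []" "W (p @ q) = W p @ W q"
  "W ((a,b) # q) = gpow GX a @ [yy] @ gpow GX b @ [yi] @ W q"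
  by (simp_all add: W_def)

lemma Pres_W: "Pres n ns ms = [R1 n, W (zip (ext ns) (ext ms))]"
  by (simp add: Pres_def R1_def W_def)

lemma L_n: "SQ n (W (p1 @ [(a,b)] @ p2 @ [(c,d)] @ p3)) (W (p1 @ [(a+n,b)] @ p2 @ [(c-n,d)] @ p3))"
proof -
  let ?T = "[yy] @ gpow GX b @ [yi] @ W p2"
  let ?R = "[yy] @ gpow GX d @ [yi] @ W p3"
  have 1: "SQ n (W p1 @ gpow GX (a+n) @ (?T @ gpow GX (c-n) @ ?R)) (W p1 @ (gpow GX a @ XX n) @ (?T @ gpow GX (c-n) @ ?R))"
    by (rule SQ_free_ctx, rule free_sym, rule gpow_add)
  have 2: "SQ n ((W p1 @ gpow GX a) @ XX n @ ?T @ (gpow GX (c-n) @ ?R)) ((W p1 @ gpow GX a) @ ?T @ XX n @ (gpow GX (c-n) @ ?R))"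
    by (rule SQ_M2)
  have 3: "SQ n ((W p1 @ gpow GX a @ ?T) @ (XX n @ gpow GX (c-n)) @ ?R) ((W p1 @ gpow GX a @ ?T) @ gpow GX c @ ?R)"
    using SQ_free_ctx[OF gpow_add[of GX n "c-n"], of n "W p1 @ gpow GX a @ ?T" ?R] by simp
  have "SQ n (W (p1 @ [(a+n,b)] @ p2 @ [(c-n,d)] @ p3)) (W (p1 @ [(a,b)] @ p2 @ [(c,d)] @ p3))"
    using 1 2 3 by simp (blast intro: SQ_trans)
  then show ?thesis by (rule SQ_sym)
qed

lemma L_m: "SQ n (W (p1 @ [(a,b)] @ p2 @ [(c,d)] @ p3)) (W (p1 @ [(a,b+n)] @ p2 @ [(c,d-n)] @ p3))"
proof -
  let ?L = "W p1 @ gpow GX a @ [yy]"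
  let ?T = "[yi] @ W p2 @ gpow GX c @ [yy]"
  let ?R = "[yi] @ W p3"
  have 1: "SQ n (?L @ gpow GX (b+n) @ (?T @ gpow GX (d-n) @ ?R)) (?L @ (gpow GX b @ XX n) @ (?T @ gpow GX (d-n) @ ?R))"
    by (rule SQ_free_ctx, rule free_sym, rule gpow_add)
  have 2: "SQ n ((?L @ gpow GX b) @ XX n @ ?T @ (gpow GX (d-n) @ ?R)) ((?L @ gpow GX b) @ ?T @ XX n @ (gpow GX (d-n) @ ?R))"
    by (rule SQ_M2)
  have 3: "SQ n ((?L @ gpow GX b @ ?T) @ (XX n @ gpow GX (d-n)) @ ?R) ((?L @ gpow GX b @ ?T) @ gpow GX d @ ?R)"
    using SQ_free_ctx[OF gpow_add[of GX n "d-n"], of n "?L @ gpow GX b @ ?T" ?R] by simp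
  have "SQ n (W (p1 @ [(a,b+n)] @ p2 @ [(c,d-n)] @ p3)) (W (p1 @ [(a,b)] @ p2 @ [(c,d)] @ p3))"
    using 1 2 3 by simp (blast intro: SQ_trans)
  then show ?thesis by (rule SQ_sym)
qed

lemma sum_upd: "i < length ns \<Longrightarrow> sum_list (ns[i:=v]) = sum_list ns - ns!i + (v::int)"
proof (induction ns arbitrary: i)
  case Nil then show ?case by simp
next
  case (Cons a ns) then show ?case by (cases i) auto
qed

lemma zip_ext: "length ns = length ms \<Longrightarrow>
  zip (ext ns) (ext ms) = zip ns ms @ [(1 - sum_list ns, 1 - sum_list ms)]"
  by (simp add: ext_def)

definition Wn :: "int list \<Rightarrow> int list \<Rightarrow> word" where
  "Wn ns ms = W (zip (ext ns) (ext ms))"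

lemma step_n: assumes "length ns = length ms" "i < length ns"
  shows "SQ n (Wn ns ms) (Wn (ns[i := ns!i + n]) ms)"
proof -
  let ?z = "zip ns ms"
  have li: "i < length ?z" using assms by simp
  have e1: "?z = take i ?z @ [(ns!i, ms!i)] @ drop (Suc i) ?z"
    using id_take_nth_drop[OF li] li by simp
  have e2: "zip (ns[i := ns!i + n]) ms = take i ?z @ [(ns!i + n, ms!i)] @ drop (Suc i) ?z"
    using zip_update[of ns i "ns!i + n" ms "ms!i"] upd_conv_take_nth_drop[OF li] by simp
  have s: "1 - sum_list (ns[i := ns!i + n]) = (1 - sum_list ns) - n" using sum_upd[OF assms(2)] by simp
  show ?thesis
    unfolding Wn_def zip_ext[OF assms(1)] zip_ext[of "ns[i := ns!i + n]" ms, simplified, OF assms(1)]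
    using L_n[of n "take i ?z" "ns!i" "ms!i" "drop (Suc i) ?z" "1 - sum_list ns" "1 - sum_list ms" "[]"]
    by (metis append.assoc append_Nil2 e1 e2 s)
qed

lemma step_m: assumes "length ns = length ms" "i < length ns"
  shows "SQ n (Wn ns ms) (Wn ns (ms[i := ms!i + n]))"
proof -
  let ?z = "zip ns ms"
  have li: "i < length ?z" using assms by simp
  have e1: "?z = take i ?z @ [(ns!i, ms!i)] @ drop (Suc i) ?z"
    using id_take_nth_drop[OF li] li by simp
  have e2: "zip ns (ms[i := ms!i + n]) = take i ?z @ [(ns!i, ms!i + n)] @ drop (Suc i) ?z"
    using zip_update[of ns i "ns!i" ms "ms!i + n"] upd_conv_take_nth_drop[OF li] by simp
  have s: "1 - sum_list (ms[i := ms!i + n]) = (1 - sum_list ms) - n" using sum_upd assms by simp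
  show ?thesis
    unfolding Wn_def zip_ext[OF assms(1)] zip_ext[of ns "ms[i := ms!i + n]", simplified, OF assms(1)]
    using L_m[of n "take i ?z" "ns!i" "ms!i" "drop (Suc i) ?z" "1 - sum_list ns" "1 - sum_list ms" "[]"]
    by (metis append.assoc append_Nil2 e1 e2 s)
qed

lemma stepT_n: assumes "length ns = length ms" "i < length ns"
  shows "SQ n (Wn ns ms) (Wn (ns[i := ns!i + n*t]) ms)"
proof (induction t rule: int_induct[where k=0])
  case base then show ?case by simp
next
  case (step1 t)
  have "SQ n (Wn (ns[i := ns!i + n*t]) ms) (Wn ((ns[i := ns!i + n*t])[i := (ns[i := ns!i + n*t])!i + n]) ms)"
    by (rule step_n) (use assms in auto)
  moreover have "(ns[i := ns!i + n*t])[i := (ns[i := ns!i + n*t])!i + n] = ns[i := ns!i + n*(t+1)]"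
    using assms by (simp add: algebra_simps)
  ultimately show ?case using SQ_trans[OF step1(2)] by simp
next
  case (step2 t)
  have "SQ n (Wn (ns[i := ns!i + n*(t-1)]) ms) (Wn ((ns[i := ns!i + n*(t-1)])[i := (ns[i := ns!i + n*(t-1)])!i + n]) ms)"
    by (rule step_n) (use assms in auto)
  moreover have "(ns[i := ns!i + n*(t-1)])[i := (ns[i := ns!i + n*(t-1)])!i + n] = ns[i := ns!i + n*t]"
    using assms by (simp add: algebra_simps)
  ultimately show ?case using SQ_trans[OF step2(2) SQ_sym] by simp
qed

lemma stepT_m: assumes "length ns = length ms" "i < length ns"
  shows "SQ n (Wn ns ms) (Wn ns (ms[i := ms!i + n*t]))"
proof (induction t rule: int_induct[where k=0])
  case base then show ?case by simp
next
  case (step1 t)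
  have "SQ n (Wn ns (ms[i := ms!i + n*t])) (Wn ns ((ms[i := ms!i + n*t])[i := (ms[i := ms!i + n*t])!i + n]))"
    by (rule step_m) (use assms in auto)
  moreover have "(ms[i := ms!i + n*t])[i := (ms[i := ms!i + n*t])!i + n] = ms[i := ms!i + n*(t+1)]"
    using assms by (simp add: algebra_simps)
  ultimately show ?case using SQ_trans[OF step1(2)] by simp
next
  case (step2 t)
  have "SQ n (Wn ns (ms[i := ms!i + n*(t-1)])) (Wn ns ((ms[i := ms!i + n*(t-1)])[i := (ms[i := ms!i + n*(t-1)])!i + n]))"
    by (rule step_m) (use assms in auto)
  moreover have "(ms[i := ms!i + n*(t-1)])[i := (ms[i := ms!i + n*(t-1)])!i + n] = ms[i := ms!i + n*t]"
    using assms by (simp add: algebra_simps)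
  ultimately show ?case using SQ_trans[OF step2(2) SQ_sym] by simp
qed

lemma take_drop_upd: "j < length a \<Longrightarrow> length a = length b \<Longrightarrow>
  (take j a @ drop j b)[j := a!j] = take (Suc j) a @ drop (Suc j) b"
  by (simp add: list_update_append take_Suc_conv_app_nth upd_conv_take_nth_drop Cons_nth_drop_Suc)

lemma multi_n: assumes "length ns = k" "length ms = k" "length ns' = k"
  and "\<forall>i<k. \<exists>t. ns'!i = ns!i + n*t"
  shows "SQ n (Wn ns ms) (Wn ns' ms)"
proof -
  have "j \<le> k \<Longrightarrow> SQ n (Wn ns ms) (Wn (take j ns' @ drop j ns) ms)" for j
  proof (induction j)
    case 0 then show ?case by simp
  next
    case (Suc j)
    let ?L = "take j ns' @ drop j ns"
    have jk: "j < k" using Suc by simp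
    obtain t where t: "ns'!j = ns!j + n*t" using assms(4) jk by blast
    have Lj: "?L!j = ns!j" using jk assms by (simp add: nth_append)
    have "SQ n (Wn ?L ms) (Wn (?L[j := ?L!j + n*t]) ms)"
      by (rule stepT_n) (use jk assms in auto)
    moreover have "?L[j := ?L!j + n*t] = take (Suc j) ns' @ drop (Suc j) ns"
      using take_drop_upd[of j ns' ns] Lj t jk assms by simp
    moreover have "SQ n (Wn ns ms) (Wn ?L ms)" using Suc by simp
    ultimately show ?case by (metis SQ_trans)
  qed
  from this[of k] show ?thesis using assms by simp
qed

lemma multi_m: assumes "length ns = k" "length ms = k" "length ms' = k"
  and "\<forall>i<k. \<exists>t. ms'!i = ms!i + n*t"
  shows "SQ n (Wn ns ms) (Wn ns ms')"
proof -
  have "j \<le> k \<Longrightarrow> SQ n (Wn ns ms) (Wn ns (take j ms' @ drop j ms))" for j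
  proof (induction j)
    case 0 then show ?case by simp
  next
    case (Suc j)
    let ?L = "take j ms' @ drop j ms"
    have jk: "j < k" using Suc by simp
    obtain t where t: "ms'!j = ms!j + n*t" using assms(4) jk by blast
    have Lj: "?L!j = ms!j" using jk assms by (simp add: nth_append)
    have "SQ n (Wn ns ?L) (Wn ns (?L[j := ?L!j + n*t]))"
      by (rule stepT_m) (use jk assms in auto)
    moreover have "?L[j := ?L!j + n*t] = take (Suc j) ms' @ drop (Suc j) ms"
      using take_drop_upd[of j ms' ms] Lj t jk assms by simp
    moreover have "SQ n (Wn ns ms) (Wn ns ?L)" using Suc by simp
    ultimately show ?case by (metis SQ_trans)
  qed
  from this[of k] show ?thesis using assms by simp
qed

lemma sum_ext: "sum_list (ext ns) = 1" by (simp add: ext_def)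

lemma ext_tl: "ns \<noteq> [] \<Longrightarrow> ext (tl (ext ns)) = tl (ext ns) @ [hd ns]"
  by (cases ns) (auto simp: ext_def)

lemma ext_hd: "ns \<noteq> [] \<Longrightarrow> ext ns = hd ns # tl (ext ns)"
  by (cases ns) (auto simp: ext_def)

lemma len_ext: "length (ext ns) = Suc (length ns)" by (simp add: ext_def)

lemma part2: assumes "length ns = length ms" "ns \<noteq> []"
  shows "SQ n (Wn ns ms) (Wn (tl (ext ns)) (tl (ext ms)))"
proof -
  have ms: "ms \<noteq> []" using assms by auto
  have 1: "zip (ext ns) (ext ms) = (hd ns, hd ms) # zip (tl (ext ns)) (tl (ext ms))"
    using ext_hd[OF assms(2)] ext_hd[OF ms] by (metis zip_Cons_Cons)
  have 2: "zip (ext (tl (ext ns))) (ext (tl (ext ms))) = zip (tl (ext ns)) (tl (ext ms)) @ [(hd ns, hd ms)]"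
    using ext_tl[OF assms(2)] ext_tl[OF ms] assms(1) by (simp add: len_ext)
  show ?thesis unfolding Wn_def 1 2
    using SQ_rot[of n "W [(hd ns, hd ms)]" "W (zip (tl (ext ns)) (tl (ext ms)))"]
    by (simp del: W_simps add: W_def)
qed

definition WC :: "(int \<times> int) list \<Rightarrow> word" where
  "WC ps = concat (map (\<lambda>(a, b). gpow GX a @ [yi] @ gpow GX b @ [yy]) ps)"

lemma WC_simps[simp]: "WC [] = []"
  "WC ((a,b) # q) = gpow GX a @ [yi] @ gpow GX b @ [yy] @ WC q"
  by (simp_all add: WC_def)

lemma L_shift: "length bs = Suc (length as) \<Longrightarrow>
  W (zip (c # as) bs) @ gpow GX d @ [yy] = gpow GX c @ [yy] @ WC (zip bs (as @ [d]))"
proof (induction as arbitrary: c bs)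
  case Nil
  then obtain b where "bs = [b]" by (cases bs) auto
  then show ?case by simp
next
  case (Cons a as)
  then obtain b bs' where bs: "bs = b # bs'" and l: "length bs' = Suc (length as)" by (cases bs) auto
  show ?case using Cons.IH[OF l, of a] bs by simp
qed

lemma block: "SQ n (u @ (gpow GX a @ [yi] @ gpow GX b @ [yy]) @ v) (u @ (gpow GX a @ [yy] @ gpow GX b @ [yi]) @ v)"
proof -
  let ?I = "inv_word (XX n)"
  let ?U = "u @ gpow GX a @ [yy]"
  have 1: "SQ n (u @ (gpow GX a @ [yi] @ gpow GX b @ [yy]) @ v) (?U @ [yi,yi] @ (gpow GX b @ [yy] @ v))"
    using SQ_free_ctx[OF free_cancel[of "[]" yy "[yi]"], of n "u @ gpow GX a" "gpow GX b @ [yy] @ v"]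
    by (auto intro: SQ_sym)
  have 2: "SQ n (?U @ [yi,yi] @ (gpow GX b @ [yy] @ v)) (?U @ ?I @ (gpow GX b @ [yy] @ v))"
    by (rule SQ_A')
  have 3: "SQ n (?U @ ?I @ (gpow GX b @ [yy] @ v)) ((?U @ ?I @ gpow GX b @ [yi]) @ [yy,yy] @ v)"
    using SQ_free_ctx[OF free_cancel[of "[]" yi "[yy]"], of n "?U @ ?I @ gpow GX b" v]
    by (auto intro: SQ_sym)
  have 4: "SQ n ((?U @ ?I @ gpow GX b @ [yi]) @ [yy,yy] @ v) ((?U @ ?I @ gpow GX b @ [yi]) @ XX n @ v)"
    by (rule SQ_A)
  have 5: "SQ n (?U @ ?I @ (gpow GX b @ [yi]) @ (XX n @ v)) (?U @ (gpow GX b @ [yi]) @ ?I @ (XX n @ v))"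
    by (rule SQ_Mi)
  have 6: "SQ n ((?U @ gpow GX b @ [yi]) @ ?I @ XX n @ v) ((?U @ gpow GX b @ [yi]) @ v)"
    by (rule SQ_free, rule free_cancel_word')
  show ?thesis using 1 2 3 4 5 6 by simp (blast intro: SQ_trans)
qed

lemma CD: "SQ n (u @ WC ps @ v) (u @ W ps @ v)"
proof (induction ps arbitrary: u)
  case Nil then show ?case by simp
next
  case (Cons p ps)
  obtain a b where p: "p = (a,b)" by (cases p)
  have 1: "SQ n (u @ (gpow GX a @ [yi] @ gpow GX b @ [yy]) @ (WC ps @ v)) (u @ (gpow GX a @ [yy] @ gpow GX b @ [yi]) @ (WC ps @ v))"
    by (rule block)
  have 2: "SQ n ((u @ gpow GX a @ [yy] @ gpow GX b @ [yi]) @ WC ps @ v) ((u @ gpow GX a @ [yy] @ gpow GX b @ [yi]) @ W ps @ v)"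
    by (rule Cons)
  show ?case using 1 2 p by simp (blast intro: SQ_trans)
qed

lemma part3: assumes "length ns = length ms" "ns \<noteq> []"
  shows "SQ n (Wn ns ms) (Wn ms (tl (ext ns)))"
proof -
  let ?a = "hd ns" and ?as = "tl (ext ns)" and ?bs = "ext ms"
  have lb: "length ?bs = Suc (length ?as)" using assms by (simp add: len_ext)
  have E: "zip (ext ns) ?bs = zip (?a # ?as) ?bs" using ext_hd[OF assms(2)] by simp
  obtain b bs' where bs: "?bs = b # bs'" by (cases "ext ms") (auto simp: ext_def)
  obtain R where R: "W (zip (?a # ?as) ?bs) = gpow GX ?a @ [yy] @ R"
    using bs by simp
  have "gpow GX ?a @ [yy] @ (R @ gpow GX ?a @ [yy]) = gpow GX ?a @ [yy] @ WC (zip ?bs (?as @ [?a]))"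
    using L_shift[OF lb, of ?a ?a] R by simp
  then have R2: "R @ gpow GX ?a @ [yy] = WC (zip ?bs (?as @ [?a]))" by simp
  have "SQ n (W (zip (?a # ?as) ?bs)) (R @ (gpow GX ?a @ [yy]))"
    unfolding R using SQ_rot[of n "gpow GX ?a @ [yy]" R] by simp
  moreover have "SQ n (WC (zip ?bs (?as @ [?a]))) (W (zip ?bs (?as @ [?a])))"
    using CD[of n "[]" _ "[]"] by simp
  ultimately have "SQ n (W (zip (?a # ?as) ?bs)) (W (zip ?bs (?as @ [?a])))"
    using R2 by (metis SQ_trans append.assoc)
  then show ?thesis unfolding Wn_def E ext_tl[OF assms(2)] .
qed

lemma Pres_SQ: "(Pres n ns ms \<simeq>\<^sub>Q Pres n ns' ms') = SQ n (Wn ns ms) (Wn ns' ms')"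
  by (simp add: Pres_W SQ_def Wn_def)

theorem lemma3p5:
  fixes n :: int and k :: nat and ns ms :: "int list"
  assumes "n \<ge> 2" and "k \<ge> 1"
    and "length ns = k" and "length ms = k"
    and "\<forall>i<k. ns ! i \<noteq> 0" and "\<forall>i<k. ms ! i \<noteq> 0"
  shows "(\<forall>ns' ms'. length ns' = k \<and> length ms' = k \<and>
            (\<forall>i<k. [ns' ! i = ns ! i] (mod n) \<and> [ms' ! i = ms ! i] (mod n))
            \<longrightarrow> Pres n ns ms \<simeq>\<^sub>Q Pres n ns' ms')
       \<and> Pres n ns ms \<simeq>\<^sub>Q Pres n (tl (ext ns)) (tl (ext ms))
       \<and> Pres n ns ms \<simeq>\<^sub>Q Pres n ms (tl (ext ns))"
proof (intro conjI allI impI)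
  have ne: "ns \<noteq> []" using assms by auto
  fix ns' ms'
  assume h: "length ns' = k \<and> length ms' = k \<and>
            (\<forall>i<k. [ns' ! i = ns ! i] (mod n) \<and> [ms' ! i = ms ! i] (mod n))"
  have cn: "\<forall>i<k. \<exists>t. ns'!i = ns!i + n*t"
  proof (intro allI impI)
    fix i assume "i < k"
    then have "[ns!i = ns'!i] (mod n)" using h by (simp add: cong_sym)
    then obtain t where "ns'!i = ns!i + n*t" by (auto simp: cong_iff_lin)
    then show "\<exists>t. ns'!i = ns!i + n*t" by blast
  qed
  have cm: "\<forall>i<k. \<exists>t. ms'!i = ms!i + n*t"
  proof (intro allI impI)
    fix i assume "i < k"
    then have "[ms!i = ms'!i] (mod n)" using h by (simp add: cong_sym)
    then obtain t where "ms'!i = ms!i + n*t" by (auto simp: cong_iff_lin)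
    then show "\<exists>t. ms'!i = ms!i + n*t" by blast
  qed
  have "SQ n (Wn ns ms) (Wn ns' ms)" using multi_n[OF assms(3,4)] h cn by blast
  moreover have "SQ n (Wn ns' ms) (Wn ns' ms')" using multi_m[OF _ assms(4)] h cm by blast
  ultimately show "Pres n ns ms \<simeq>\<^sub>Q Pres n ns' ms'" unfolding Pres_SQ by (rule SQ_trans)
next
  have ne: "ns \<noteq> []" using assms by auto
  show "Pres n ns ms \<simeq>\<^sub>Q Pres n (tl (ext ns)) (tl (ext ms))"
    unfolding Pres_SQ using part2 ne assms by simp
  show "Pres n ns ms \<simeq>\<^sub>Q Pres n ms (tl (ext ns))"
    unfolding Pres_SQ using part3 ne assms by simp
qed

end
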